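(* Let $A\in\mathbb{R}^{n\times n}$, let $W\in\mathbb{R}^{n\times n}$ be symmetric positive definite, let $C=\mathrm{diag}(C_{11},\dots,C_{nn})$ be diagonal positive definite and $V=\mathrm{diag}(\sigma_1^2,\dots,\sigma_n^2)$ with $\sigma_j>0$. Let $\Sigma$ be the unique positive semidefinite solution of $\Sigma=A\Sigma A^T-A\Sigma C^T(C\Sigma C^T+V)^{-1}C\Sigma A^T+W$ and let $\overline\Sigma=\Sigma-\Sigma C^T(C\Sigma C^T+V)^{-1}C\Sigma=(C^TV^{-1}C+\Sigma^{-1})^{-1}$ be the a posteriori Kalman filter error covariance. Then $$n\ln\left(\frac{\sigma_u^2}{C_u^2+\sigma_u^2\lambda_n^{-1}(W)}\right)\le\ln\det\overline\Sigma\le n\ln\left(\frac{\sigma_l^2}{C_l^2}\right).$$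
   Context: $\lambda_n(\cdot)$ denotes the smallest eigenvalue. The indices $l,u$ are defined by $l=\arg\min_{1\le j\le n}C_{jj}^2/\sigma_j^2$ and $u=\arg\max_{1\le j\le n}C_{jj}^2/\sigma_j^2$, with $C_l:=C_{ll}$, $C_u:=C_{uu}$. *)

theory Defs
  imports "HOL-Analysis.Analysis"
begin

definition diag_mat :: "real^'n \<Rightarrow> real^'n^'n" where
  "diag_mat d = (\<chi> i j. if i = j then d $ i else 0)"

definition symmetric_mat :: "real^'n^'n \<Rightarrow> bool" where
  "symmetric_mat M \<longleftrightarrow> transpose M = M"

definition pos_def :: "real^'n^'n \<Rightarrow> bool" where
  "pos_def M \<longleftrightarrow> symmetric_mat M \<and> (\<forall>x. x \<noteq> 0 \<longrightarrow> x \<bullet> (M *v x) > 0)"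

definition pos_semidef :: "real^'n^'n \<Rightarrow> bool" where
  "pos_semidef M \<longleftrightarrow> symmetric_mat M \<and> (\<forall>x. x \<bullet> (M *v x) \<ge> 0)"

definition is_eigenvalue :: "real^'n^'n \<Rightarrow> real \<Rightarrow> bool" where
  "is_eigenvalue M mu \<longleftrightarrow> (\<exists>x. x \<noteq> 0 \<and> M *v x = mu *s x)"

definition min_eigenvalue :: "real^'n^'n \<Rightarrow> real" where
  "min_eigenvalue M = Min {mu. is_eigenvalue M mu}"

end

theory Submission
  imports Defs
begin


lemma sym_dot:
  fixes S :: "real^'n^'n"
  assumes "transpose S = S"
  shows "(S *v x) \<bullet> y = x \<bullet> (S *v y)"
  by (metis assms dot_lmul_matrix inner_commute vector_transpose_matrix)

definition OE :: "real^'n^'n \<Rightarrow> (real^'n) set \<Rightarrow> bool" where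
  "OE S B \<longleftrightarrow> (\<forall>b\<in>B. norm b = 1 \<and> (\<exists>c. S *v b = c *s b)) \<and> (\<forall>a\<in>B. \<forall>b\<in>B. a \<noteq> b \<longrightarrow> a \<bullet> b = 0)"

lemma quad_expand:
  fixes S :: "real^'n^'n"
  assumes "transpose S = S"
  shows "(x + t *\<^sub>R r) \<bullet> (S *v (x + t *\<^sub>R r)) = x \<bullet> (S *v x) + 2 * t * (r \<bullet> (S *v x)) + t^2 * (r \<bullet> (S *v r))"
proof -
  have "x \<bullet> (S *v r) = r \<bullet> (S *v x)" using sym_dot[OF assms, of r x] by (simp add: inner_commute)
  then show ?thesis
    by (simp add: matrix_vector_right_distrib inner_add_left inner_add_right algebra_simps power2_eq_square scalar_mult_eq_scaleR matrix_vector_mult_scaleR)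
qed

lemma ext_step:
  fixes S :: "real^'n^'n"
  assumes sym: "transpose S = S" and oe: "OE S B" and fin: "finite B" and cB: "card B < CARD('n)"
  shows "\<exists>x. norm x = 1 \<and> (\<forall>b\<in>B. x \<bullet> b = 0) \<and> (\<exists>c. S *v x = c *s x)"
proof -
  have "dim (span B) \<le> card B" using fin by (simp add: dim_le_card' dim_span)
  hence "span B \<noteq> UNIV" using cB by (metis dim_UNIV DIM_cart DIM_real mult_1_right not_le)
  then obtain a :: "real^'n" where a: "a \<noteq> 0" "\<forall>x\<in>span B. a \<bullet> x = 0"
    using span_not_UNIV_orthogonal by blast
  define K where "K = sphere (0::real^'n) 1 \<inter> (\<Inter>b\<in>B. {y. b \<bullet> y = 0})"
  have Kc: "compact K" unfolding K_def
    by (intro compact_Int_closed compact_sphere closed_INT) (auto intro: closed_hyperplane)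
  have aK: "a /\<^sub>R norm a \<in> K" using a unfolding K_def
    by (auto simp: span_base inner_commute)
  have fc: "continuous_on K (\<lambda>x. x \<bullet> (S *v x))"
    by (intro continuous_intros)
  obtain x where xK: "x \<in> K" and xmax: "\<forall>y\<in>K. y \<bullet> (S *v y) \<le> x \<bullet> (S *v x)"
    using continuous_attains_sup[OF Kc _ fc] aK by blast
  define lam where "lam = x \<bullet> (S *v x)"
  define r where "r = S *v x - lam *\<^sub>R x"
  have nx: "norm x = 1" and xB: "\<forall>b\<in>B. b \<bullet> x = 0" using xK by (auto simp: K_def)
  have xx: "x \<bullet> x = 1" using nx by (simp add: dot_square_norm)
  have rx: "r \<bullet> x = 0" unfolding r_def lam_def using xx by (simp add: inner_diff_left inner_diff_right inner_commute)
  have rB: "\<forall>b\<in>B. b \<bullet> r = 0"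
  proof
    fix b assume bB: "b \<in> B"
    then obtain c where c: "S *v b = c *s b" using oe unfolding OE_def by blast
    have "b \<bullet> (S *v x) = (S *v b) \<bullet> x" using sym_dot[OF sym, of b x] by simp
    also have "\<dots> = 0" using c xB bB by (simp add: scalar_mult_eq_scaleR)
    finally show "b \<bullet> r = 0" using xB bB by (simp add: r_def inner_diff_right)
  qed
  have rSx: "r \<bullet> (S *v x) = r \<bullet> r"
  proof -
    have "S *v x = r + lam *\<^sub>R x" by (simp add: r_def)
    then show ?thesis using rx by (simp add: inner_add_right)
  qed
  have key: "2 * t * (r \<bullet> r) \<le> t^2 * (lam * (r \<bullet> r) - r \<bullet> (S *v r))" if t: "t > 0" for t
  proof -
    define y where "y = x + t *\<^sub>R r"
    have yy: "y \<bullet> y = 1 + t^2 * (r \<bullet> r)" unfolding y_def using xx rx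
      by (simp add: inner_add_left inner_add_right inner_commute power2_eq_square)
    hence ny: "norm y > 0" by (metis add_pos_nonneg inner_ge_zero norm_eq_sqrt_inner real_sqrt_gt_0_iff zero_le_power2 mult_nonneg_nonneg zero_less_one)
    have "y /\<^sub>R norm y \<in> K" unfolding K_def using ny xB rB
      by (auto simp: y_def inner_add_right)
    hence "(y /\<^sub>R norm y) \<bullet> (S *v (y /\<^sub>R norm y)) \<le> lam" using xmax lam_def by blast
    hence "(y \<bullet> (S *v y)) / (norm y)^2 \<le> lam"
      by (simp add: scalar_mult_eq_scaleR matrix_vector_mult_scaleR power2_eq_square divide_inverse mult_ac)
    hence "y \<bullet> (S *v y) \<le> lam * (y \<bullet> y)" using ny by (simp add: divide_le_eq dot_square_norm)
    then show ?thesis unfolding yy using quad_expand[OF sym, of x t r] rSx lam_def y_def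
      by (simp add: algebra_simps)
  qed
  have "r \<bullet> r \<le> 0"
  proof (rule ccontr)
    assume "\<not> r \<bullet> r \<le> 0"
    hence pos: "r \<bullet> r > 0" by linarith
    define b where "b = lam * (r \<bullet> r) - r \<bullet> (S *v r)"
    define t where "t = (r \<bullet> r) / (\<bar>b\<bar> + 1)"
    have t: "t > 0" using pos by (simp add: t_def)
    have "2 * t * (r \<bullet> r) \<le> t^2 * b" using key[OF t] b_def by simp
    hence "2 * (r \<bullet> r) \<le> t * b" using t by (simp add: power2_eq_square)
    moreover have "t * b < r \<bullet> r"
    proof -
      have "t * b \<le> t * \<bar>b\<bar>" using t by (simp add: mult_left_mono)
      also have "\<dots> < r \<bullet> r" using pos by (simp add: t_def field_simps)
      finally show ?thesis .
    qed
    ultimately show False using pos by simp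
  qed
  hence "r = 0" by (metis inner_gt_zero_iff not_le)
  hence "S *v x = lam *s x" by (simp add: r_def scalar_mult_eq_scaleR)
  then show ?thesis using nx xB by (auto simp: inner_commute)
qed



lemma OE_exists:
  fixes S :: "real^'n^'n"
  assumes sym: "transpose S = S"
  shows "k \<le> CARD('n) \<Longrightarrow> \<exists>B. OE S B \<and> finite B \<and> card B = k"
proof (induction k)
  case 0
  then show ?case by (intro exI[of _ "{}"]) (simp add: OE_def)
next
  case (Suc k)
  then obtain B where B: "OE S B" "finite B" "card B = k" by auto
  then obtain x where x: "norm x = 1" "\<forall>b\<in>B. x \<bullet> b = 0" "\<exists>c. S *v x = c *s x"
    using ext_step[OF sym B(1) B(2)] Suc.prems by auto
  have xB: "x \<notin> B" using x by (metis inner_eq_zero_iff norm_zero zero_neq_one)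
  have "OE S (insert x B)" using B(1) x unfolding OE_def by (auto simp: inner_commute)
  then show ?case using B xB by (intro exI[of _ "insert x B"]) auto
qed

lemma spectral:
  fixes S :: "real^'n^'n"
  assumes sym: "transpose S = S"
  shows "\<exists>(Q::real^'n^'n) e. transpose Q ** Q = mat 1 \<and> S ** Q = Q ** diag_mat e"
proof -
  obtain B where B: "OE S B" "finite B" "card B = CARD('n)" using OE_exists[OF sym, of "CARD('n)"] by auto
  obtain h where h: "bij_betw h (UNIV::'n set) B"
    using finite_same_card_bij[of "UNIV::'n set" B] B by auto
  have hB: "h j \<in> B" for j using h by (auto simp: bij_betw_def)
  have hinj: "h i = h j \<Longrightarrow> i = j" for i j using h by (auto simp: bij_betw_def inj_def)
  define e where "e = (\<chi> j. (SOME c. S *v h j = c *s h j))"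
  have he: "S *v h j = e $ j *s h j" for j
    unfolding e_def vec_lambda_beta by (rule someI_ex) (use B(1) hB in \<open>auto simp: OE_def\<close>)
  define Q where "Q = (\<chi> i j. h j $ i)"
  have "transpose Q ** Q = mat 1"
  proof -
    have "(\<Sum>k\<in>UNIV. h i $ k * h j $ k) = (if i = j then 1 else 0)" for i j
    proof -
      have "(\<Sum>k\<in>UNIV. h i $ k * h j $ k) = h i \<bullet> h j" by (simp add: inner_vec_def)
      also have "\<dots> = (if i = j then 1 else 0)"
        using B(1) hB hinj[of i j] unfolding OE_def
        by (auto simp: dot_square_norm)
      finally show ?thesis .
    qed
    then show ?thesis by (simp add: vec_eq_iff matrix_matrix_mult_def transpose_def Q_def mat_def)
  qed
  moreover have "S ** Q = Q ** diag_mat e"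
  proof -
    have "(\<Sum>k\<in>UNIV. S $ i $ k * h j $ k) = e $ j * h j $ i" for i j
      using arg_cong[OF he[of j], of "\<lambda>v. v $ i"] by (simp add: matrix_vector_mult_def)
    moreover have "(\<Sum>k\<in>UNIV. h k $ i * (if k = j then e $ k else 0)) = h j $ i * e $ j" for i j
      by (simp add: if_distrib cong: if_cong)
    ultimately show ?thesis by (simp add: vec_eq_iff matrix_matrix_mult_def Q_def diag_mat_def mult.commute)
  qed
  ultimately show ?thesis by (intro exI[of _ Q] exI[of _ e]) simp
qed

lemma spec_facts:
  fixes S Q :: "real^'n^'n" and e :: "real^'n"
  assumes QQ: "transpose Q ** Q = mat 1" and SQ: "S ** Q = Q ** diag_mat e"
  shows "det S = (\<Prod>j\<in>UNIV. e $ j)"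
    and "\<And>j. \<exists>v. v \<noteq> 0 \<and> S *v v = e $ j *s v"
    and "\<And>mu. is_eigenvalue S mu \<Longrightarrow> mu \<in> range (\<lambda>j. e $ j)"
    and "\<And>x. \<exists>y. x \<bullet> (S *v x) = (\<Sum>j\<in>UNIV. e $ j * (y $ j)^2) \<and> x \<bullet> x = (\<Sum>j\<in>UNIV. (y $ j)^2)"
proof -
  have QQ': "Q ** transpose Q = mat 1" using QQ matrix_left_right_inverse by blast
  have dQ: "det (transpose Q) * det Q = 1" using arg_cong[OF QQ, of det] by (simp add: det_mul)
  have "det (transpose Q ** S ** Q) = det (diag_mat e)"
    by (metis QQ SQ matrix_mul_assoc matrix_mul_lid)
  also have "\<dots> = (\<Prod>j\<in>UNIV. e $ j)" by (subst det_diagonal) (auto simp: diag_mat_def)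
  finally have "det S * (det (transpose Q) * det Q) = (\<Prod>j\<in>UNIV. e $ j)" by (simp add: det_mul mult_ac)
  then show "det S = (\<Prod>j\<in>UNIV. e $ j)" using dQ by simp
  have diag_v: "(diag_mat e *v y) $ i = e $ i * y $ i" for y i
    by (simp add: matrix_vector_mult_def diag_mat_def if_distrib[where f="\<lambda>z. z * _"] cong: if_cong)
  have diag_ax: "diag_mat e *v axis j 1 = e $ j *s axis j 1" for j
    by (simp add: vec_eq_iff diag_v axis_def)
  show "\<exists>v. v \<noteq> 0 \<and> S *v v = e $ j *s v" for j
  proof (intro exI conjI)
    show "Q *v axis j 1 \<noteq> 0"
      by (metis QQ axis_eq_0_iff matrix_vector_mul_assoc matrix_vector_mul_lid matrix_vector_mult_0_right zero_neq_one)
    show "S *v (Q *v axis j 1) = e $ j *s (Q *v axis j 1)"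
      by (metis SQ diag_ax matrix_vector_mul_assoc vector_scalar_commute matrix_vector_mult_scaleR scalar_mult_eq_scaleR)
  qed
  show "mu \<in> range (\<lambda>j. e $ j)" if ev: "is_eigenvalue S mu" for mu
  proof -
    obtain x where x: "x \<noteq> 0" "S *v x = mu *s x" using ev by (auto simp: is_eigenvalue_def)
    define y where "y = transpose Q *v x"
    have xy: "x = Q *v y" by (metis QQ' matrix_vector_mul_assoc matrix_vector_mul_lid y_def)
    have "y \<noteq> 0" using x xy by auto
    then obtain i where yi: "y $ i \<noteq> 0" by (auto simp: vec_eq_iff)
    have "Q *v (diag_mat e *v y) = Q *v (mu *s y)"
      using x(2) by (simp add: xy matrix_vector_mul_assoc SQ scalar_mult_eq_scaleR matrix_vector_mult_scaleR)
    hence "transpose Q *v (Q *v (diag_mat e *v y)) = transpose Q *v (Q *v (mu *s y))" by simp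
    hence "diag_mat e *v y = mu *s y" by (simp add: matrix_vector_mul_assoc QQ matrix_mul_assoc)
    hence "e $ i * y $ i = mu * y $ i" using diag_v by (metis vector_smult_component)
    hence "mu = e $ i" using yi by simp
    then show ?thesis by auto
  qed
  show "\<exists>y. x \<bullet> (S *v x) = (\<Sum>j\<in>UNIV. e $ j * (y $ j)^2) \<and> x \<bullet> x = (\<Sum>j\<in>UNIV. (y $ j)^2)" for x
  proof (intro exI conjI)
    define y where "y = transpose Q *v x"
    have xy: "x = Q *v y" by (metis QQ' matrix_vector_mul_assoc matrix_vector_mul_lid y_def)
    have ip: "(Q *v u) \<bullet> (Q *v w) = u \<bullet> w" for u w
      by (metis QQ dot_lmul_matrix matrix_vector_mul_assoc matrix_vector_mul_lid vector_transpose_matrix)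
    have "x \<bullet> (S *v x) = (Q *v y) \<bullet> (Q *v (diag_mat e *v y))"
      by (simp add: xy matrix_vector_mul_assoc SQ)
    also have "\<dots> = (\<Sum>j\<in>UNIV. e $ j * (y $ j)^2)"
      by (simp only: ip) (simp add: inner_vec_def diag_v power2_eq_square mult_ac)
    finally show "x \<bullet> (S *v x) = (\<Sum>j\<in>UNIV. e $ j * (y $ j)^2)" .
    show "x \<bullet> x = (\<Sum>j\<in>UNIV. (y $ j)^2)"
      by (simp only: xy ip) (simp add: inner_vec_def power2_eq_square)
  qed
qed



lemma diag_mv: "(diag_mat d *v y) $ i = d $ i * y $ i"
  by (simp add: matrix_vector_mult_def diag_mat_def if_distrib[where f="\<lambda>z. z * _"] cong: if_cong)

lemma diag_tr: "transpose (diag_mat d) = diag_mat d"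
  by (simp add: vec_eq_iff transpose_def diag_mat_def)

lemma transpose_diff': "transpose (A - B) = transpose A - transpose (B::real^'n^'m)"
  by (simp add: vec_eq_iff transpose_def)

lemma transpose_add': "transpose (A + B) = transpose A + transpose (B::real^'n^'m)"
  by (simp add: vec_eq_iff transpose_def)

lemma aux_sub: "(a::'a::ab_group_add) - b = m \<Longrightarrow> b = a - m" by (simp add: algebra_simps)

lemma aux_sub2: "p = z - q \<Longrightarrow> (p::'a::ab_group_add) + v = z \<Longrightarrow> v = q" by (metis eq_diff_eq add_left_cancel)

theorem theorem6:
  fixes A W \<Sigma> :: "real^'n^'n" and c \<sigma> :: "real^'n" and l u :: 'n
  assumes W_pd: "pos_def W"
    and c_pos: "\<forall>j. c $ j > 0"
    and \<sigma>_pos: "\<forall>j. \<sigma> $ j > 0"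
    and \<Sigma>_psd: "pos_semidef \<Sigma>"
    and DARE: "let C = diag_mat c; V = diag_mat (\<chi> j. (\<sigma> $ j)^2) in
      \<Sigma> = A ** \<Sigma> ** transpose A
          - A ** \<Sigma> ** transpose C ** matrix_inv (C ** \<Sigma> ** transpose C + V) ** C ** \<Sigma> ** transpose A
          + W"
    and l_min: "\<forall>j. (c $ l)^2 / (\<sigma> $ l)^2 \<le> (c $ j)^2 / (\<sigma> $ j)^2"
    and u_max: "\<forall>j. (c $ j)^2 / (\<sigma> $ j)^2 \<le> (c $ u)^2 / (\<sigma> $ u)^2"
  shows "let C = diag_mat c; V = diag_mat (\<chi> j. (\<sigma> $ j)^2);
             \<Sigma>bar = \<Sigma> - \<Sigma> ** transpose C ** matrix_inv (C ** \<Sigma> ** transpose C + V) ** C ** \<Sigma>;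
             n = real CARD('n)
         in n * ln ((\<sigma> $ u)^2 / ((c $ u)^2 + (\<sigma> $ u)^2 / min_eigenvalue W)) \<le> ln (det \<Sigma>bar)
          \<and> ln (det \<Sigma>bar) \<le> n * ln ((\<sigma> $ l)^2 / (c $ l)^2)"
proof -
  define C where "C = diag_mat c"
  define V where "V = diag_mat (\<chi> j. (\<sigma> $ j)^2)"
  define M where "M = C ** \<Sigma> ** transpose C + V"
  define Mi where "Mi = matrix_inv M"
  define Sb where "Sb = \<Sigma> - \<Sigma> ** transpose C ** Mi ** C ** \<Sigma>"
  have D: "\<Sigma> = A ** \<Sigma> ** transpose A - A ** \<Sigma> ** transpose C ** Mi ** C ** \<Sigma> ** transpose A + W"
    using DARE unfolding Let_def Mi_def M_def C_def V_def .
  have trC: "transpose C = C" by (simp add: C_def diag_tr)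
  have trV: "transpose V = V" by (simp add: V_def diag_tr)
  have trS: "transpose \<Sigma> = \<Sigma>" using \<Sigma>_psd by (simp add: pos_semidef_def symmetric_mat_def)
  have trW: "transpose W = W" using W_pd by (simp add: pos_def_def symmetric_mat_def)
  have Spsd: "x \<bullet> (\<Sigma> *v x) \<ge> 0" for x using \<Sigma>_psd by (simp add: pos_semidef_def)
  have Cv: "(C *v x) $ j = c $ j * x $ j" for x j by (simp add: C_def diag_mv)
  have Vv: "(V *v x) $ j = (\<sigma> $ j)^2 * x $ j" for x j by (simp add: V_def diag_mv)
  have Vq: "x \<bullet> (V *v x) = (\<Sum>j\<in>UNIV. (\<sigma> $ j)^2 * (x $ j)^2)" for x
    by (simp add: inner_vec_def Vv power2_eq_square mult_ac)
  have Vnn: "x \<bullet> (V *v x) \<ge> 0" for x unfolding Vq by (intro sum_nonneg) simp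
  have Vpos: "x \<bullet> (V *v x) > 0" if x0: "x \<noteq> 0" for x
  proof -
    obtain i where "x $ i \<noteq> 0" using x0 by (metis vec_eq_iff zero_index)
    hence "(\<sigma> $ i)^2 * (x $ i)^2 > 0" using \<sigma>_pos by (metis mult_pos_pos power2_less_0 zero_less_power2 not_less_iff_gr_or_eq less_numeral_extra(3))
    hence "0 < (\<Sum>j\<in>{i}. (\<sigma> $ j)^2 * (x $ j)^2)" by simp
    also have "\<dots> \<le> (\<Sum>j\<in>UNIV. (\<sigma> $ j)^2 * (x $ j)^2)" by (intro sum_mono2) auto
    finally show ?thesis unfolding Vq .
  qed
  have Mv: "M *v x = C *v (\<Sigma> *v (C *v x)) + V *v x" for x
    by (simp add: M_def trC matrix_vector_mult_add_rdistrib matrix_vector_mul_assoc matrix_mul_assoc)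
  have Cdot: "x \<bullet> (C *v z) = (C *v x) \<bullet> z" for x z using sym_dot[OF trC, of x z] by simp
  have Mq: "x \<bullet> (M *v x) = (C *v x) \<bullet> (\<Sigma> *v (C *v x)) + x \<bullet> (V *v x)" for x
    by (simp add: Mv inner_add_right Cdot)
  have Minj: "inj ((*v) M)"
  proof (rule injI)
    fix x y assume "M *v x = M *v y"
    hence "M *v (x - y) = 0" by (simp add: matrix_vector_mult_diff_distrib)
    hence "(x - y) \<bullet> (M *v (x - y)) = 0" by simp
    hence "(x - y) \<bullet> (V *v (x - y)) \<le> 0" unfolding Mq using Spsd[of "C *v (x - y)"] by linarith
    thus "x = y" using Vpos[of "x - y"] by force
  qed
  have Minv: "invertible M" using Minj matrix_left_invertible_injective invertible_left_inverse by blast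
  have MMi: "M ** Mi = mat 1" and MiM: "Mi ** M = mat 1"
    using someI_ex[OF Minv[unfolded invertible_def]] by (auto simp: Mi_def matrix_inv_def)
  have trM: "transpose M = M" by (simp add: M_def matrix_transpose_mul trC trS trV matrix_mul_assoc transpose_add')
  have trMi: "transpose Mi = Mi"
  proof -
    have "transpose Mi ** M = mat 1" by (metis MMi matrix_transpose_mul trM transpose_mat)
    hence "transpose Mi = transpose Mi ** (M ** Mi)" by (simp add: MMi)
    also have "\<dots> = Mi" by (metis \<open>transpose Mi ** M = mat 1\<close> matrix_mul_assoc matrix_mul_lid)
    finally show ?thesis .
  qed
  have trSb: "transpose Sb = Sb"
    by (simp add: Sb_def transpose_diff' matrix_transpose_mul trC trS trMi matrix_mul_assoc)
  have Sbv: "Sb *v x = \<Sigma> *v x - \<Sigma> *v (C *v (Mi *v (C *v (\<Sigma> *v x))))" for x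
    by (simp add: Sb_def trC matrix_vector_mult_diff_rdistrib matrix_vector_mul_assoc matrix_mul_assoc)
  have MMiv: "M *v (Mi *v z) = z" for z by (simp add: matrix_vector_mul_assoc MMi)
  have Sbpsd: "x \<bullet> (Sb *v x) \<ge> 0" for x
  proof -
    define z where "z = C *v (\<Sigma> *v x)"
    define w where "w = Mi *v z"
    have Mw: "C *v (\<Sigma> *v (C *v w)) + V *v w = z" using MMiv[of z] by (simp add: Mv w_def)
    define v where "v = x - C *v w"
    have e1: "x \<bullet> (Sb *v x) = x \<bullet> (\<Sigma> *v x) - z \<bullet> w"
      by (simp add: Sbv inner_diff_right Cdot z_def w_def sym_dot[OF trS, symmetric])
    have e2: "(C *v w) \<bullet> (\<Sigma> *v x) = w \<bullet> z" by (simp add: z_def Cdot)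
    have e3: "(C *v w) \<bullet> (\<Sigma> *v (C *v w)) = w \<bullet> z - w \<bullet> (V *v w)"
    proof -
      have "(C *v w) \<bullet> (\<Sigma> *v (C *v w)) = w \<bullet> (C *v (\<Sigma> *v (C *v w)))" by (simp add: Cdot)
      also have "\<dots> = w \<bullet> (z - V *v w)" using Mw by (metis add_diff_cancel_right')
      finally show ?thesis by (simp add: inner_diff_right)
    qed
    have e4: "x \<bullet> (\<Sigma> *v (C *v w)) = w \<bullet> z" using e2 sym_dot[OF trS, of "C *v w" x] by (simp add: inner_commute)
    have "v \<bullet> (\<Sigma> *v v) = x \<bullet> (\<Sigma> *v x) - 2 * (w \<bullet> z) + (w \<bullet> z - w \<bullet> (V *v w))"
      unfolding v_def by (simp add: matrix_vector_mult_diff_distrib inner_diff_left inner_diff_right e2 e3 e4)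
    hence "x \<bullet> (Sb *v x) = v \<bullet> (\<Sigma> *v v) + w \<bullet> (V *v w)" unfolding e1 by (simp add: inner_commute)
    thus ?thesis using Spsd[of v] Vnn[of w] by linarith
  qed

  have gen: "A *v (Sb *v (B *v x)) = (A ** \<Sigma> ** B - A ** \<Sigma> ** C ** Mi ** C ** \<Sigma> ** B) *v x" for B x
    by (simp only: Sbv) (simp add: matrix_vector_mult_diff_rdistrib
            matrix_vector_mul_assoc matrix_mul_assoc matrix_vector_mult_diff_distrib)
  have Sv_D: "\<Sigma> *v x = A *v (Sb *v (transpose A *v x)) + W *v x" for x
  proof -
    have "\<Sigma> *v x = (A ** \<Sigma> ** transpose A - A ** \<Sigma> ** transpose C ** Mi ** C ** \<Sigma> ** transpose A + W) *v x"
      using D by (metis)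
    then show ?thesis unfolding gen trC by (simp only: matrix_vector_mult_add_rdistrib)
  qed
  have Adot: "x \<bullet> (A *v v) = (transpose A *v x) \<bullet> v" for x v
    by (metis dot_lmul_matrix transpose_transpose vector_transpose_matrix)
  have SgeW: "x \<bullet> (W *v x) \<le> x \<bullet> (\<Sigma> *v x)" for x
    using Sbpsd[of "transpose A *v x"] by (simp add: Sv_D[of x] inner_add_right Adot)
  obtain QW :: "real^'n^'n" and eW where QW: "transpose QW ** QW = mat 1" "W ** QW = QW ** diag_mat eW"
    using spectral[OF trW] by blast
  note WF = spec_facts[OF QW]
  define lam where "lam = min_eigenvalue W"
  have evset: "{mu. is_eigenvalue W mu} = range (\<lambda>j. eW $ j)"
  proof
    show "{mu. is_eigenvalue W mu} \<subseteq> range (\<lambda>j. eW $ j)" using WF(3) by blast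
    show "range (\<lambda>j. eW $ j) \<subseteq> {mu. is_eigenvalue W mu}" using WF(2) by (auto simp: is_eigenvalue_def)
  qed
  have lam_in: "lam \<in> range (\<lambda>j. eW $ j)" and lam_le: "\<And>j. lam \<le> eW $ j"
    unfolding lam_def min_eigenvalue_def evset by (auto intro: Min_in Min_le)
  have eWpos: "eW $ j > 0" for j
  proof -
    obtain v where v: "v \<noteq> 0" "W *v v = eW $ j *s v" using WF(2) by blast
    have "v \<bullet> (W *v v) > 0" using W_pd v(1) by (simp add: pos_def_def)
    hence "eW $ j * (v \<bullet> v) > 0" using v(2) by (simp add: scalar_mult_eq_scaleR)
    moreover have "v \<bullet> v > 0" using v(1) by simp
    ultimately show ?thesis by (simp add: zero_less_mult_iff)
  qed
  have lam_pos: "lam > 0" using lam_in eWpos by auto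
  have lamq: "lam * (x \<bullet> x) \<le> x \<bullet> (W *v x)" for x
  proof -
    obtain y where y: "x \<bullet> (W *v x) = (\<Sum>j\<in>UNIV. eW $ j * (y $ j)^2)" "x \<bullet> x = (\<Sum>j\<in>UNIV. (y $ j)^2)"
      using WF(4) by blast
    have "lam * (x \<bullet> x) = (\<Sum>j\<in>UNIV. lam * (y $ j)^2)" by (simp add: y(2) sum_distrib_left)
    also have "\<dots> \<le> (\<Sum>j\<in>UNIV. eW $ j * (y $ j)^2)" by (intro sum_mono mult_right_mono lam_le) simp
    finally show ?thesis using y(1) by simp
  qed
  have lamS: "lam * (x \<bullet> x) \<le> x \<bullet> (\<Sigma> *v x)" for x using lamq[of x] SgeW[of x] by linarith
  define dl where "dl = (c $ l)^2 / (\<sigma> $ l)^2"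
  define du where "du = (c $ u)^2 / (\<sigma> $ u)^2"
  define m where "m = (\<sigma> $ l)^2 / (c $ l)^2"
  define k where "k = (\<sigma> $ u)^2 / ((c $ u)^2 + (\<sigma> $ u)^2 / lam)"
  have dl_pos: "dl > 0" using c_pos[rule_format, of l] \<sigma>_pos[rule_format, of l] by (simp add: dl_def)
  have du_pos: "du > 0" using c_pos[rule_format, of u] \<sigma>_pos[rule_format, of u] by (simp add: du_def)
  have m_eq: "m = 1 / dl" by (simp add: m_def dl_def)
  have k_eq: "k = 1 / (du + 1 / lam)"
    using \<sigma>_pos[rule_format, of u] lam_pos by (simp add: k_def du_def field_simps)
  have k_pos: "k > 0" using du_pos lam_pos by (simp add: k_eq add_pos_pos)
  have m_pos: "m > 0" using dl_pos by (simp add: m_eq)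
  have bnd: "k \<le> mu \<and> mu \<le> m" if x0: "x \<noteq> 0" and ev: "Sb *v x = mu *s x" for x mu
  proof -
    define z where "z = C *v (\<Sigma> *v x)"
    define w where "w = Mi *v z"
    have Mw: "C *v (\<Sigma> *v (C *v w)) + V *v w = z" using MMiv[of z] by (simp add: Mv w_def)
    have e1: "\<Sigma> *v (C *v w) = \<Sigma> *v x - mu *s x" using ev unfolding Sbv z_def w_def by (rule aux_sub)
    have "C *v (\<Sigma> *v (C *v w)) = z - mu *s (C *v x)"
      by (simp add: e1 z_def matrix_vector_mult_diff_distrib scalar_mult_eq_scaleR matrix_vector_mult_scaleR)
    hence Vw: "V *v w = mu *s (C *v x)" using Mw by (rule aux_sub2)
    define Dx where "Dx = (\<chi> j. (c $ j)^2 / (\<sigma> $ j)^2 * x $ j)"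
    have CwD: "C *v w = mu *s Dx"
    proof -
      have "(C *v w) $ j = (mu *s Dx) $ j" for j
      proof -
        have "(\<sigma> $ j)^2 * w $ j = mu * (c $ j * x $ j)"
          using arg_cong[OF Vw, of "\<lambda>v. v $ j"] by (simp add: Vv Cv)
        moreover have "(\<sigma> $ j)^2 \<noteq> 0" using \<sigma>_pos[rule_format, of j] by simp
        ultimately have "w $ j = mu * (c $ j * x $ j) / (\<sigma> $ j)^2"
          by (simp add: field_simps)
        thus ?thesis by (simp add: Cv Dx_def power2_eq_square)
      qed
      thus ?thesis by (simp add: vec_eq_iff)
    qed
    define y where "y = x - mu *s Dx"
    have Sy: "\<Sigma> *v y = mu *s x"
      using e1 by (simp add: y_def CwD matrix_vector_mult_diff_distrib scalar_mult_eq_scaleR matrix_vector_mult_scaleR)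
    have xDx: "Dx \<bullet> x = (\<Sum>j\<in>UNIV. (c $ j)^2 / (\<sigma> $ j)^2 * (x $ j)^2)"
      by (simp add: Dx_def inner_vec_def power2_eq_square mult_ac)
    have xx: "x \<bullet> x = (\<Sum>j\<in>UNIV. (x $ j)^2)" by (simp add: inner_vec_def power2_eq_square)
    have Dlo: "dl * (x \<bullet> x) \<le> Dx \<bullet> x"
      unfolding xDx xx sum_distrib_left using l_min by (intro sum_mono mult_right_mono) (auto simp: dl_def)
    have Dhi: "Dx \<bullet> x \<le> du * (x \<bullet> x)"
      unfolding xDx xx sum_distrib_left using u_max by (intro sum_mono mult_right_mono) (auto simp: du_def)
    have xpos: "x \<bullet> x > 0" using x0 by simp
    have yx: "y \<bullet> x = x \<bullet> x - mu * (Dx \<bullet> x)" by (simp add: y_def inner_diff_left scalar_mult_eq_scaleR)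
    have ySy: "y \<bullet> (\<Sigma> *v y) = mu * (y \<bullet> x)" by (simp add: Sy scalar_mult_eq_scaleR)
    have "x \<bullet> (Sb *v x) = mu * (x \<bullet> x)" by (simp add: ev scalar_mult_eq_scaleR)
    hence mu_nn: "mu \<ge> 0" using Sbpsd[of x] xpos by (simp add: zero_le_mult_iff)
    have up: "mu \<le> m"
    proof (cases "mu = 0")
      case True then show ?thesis using m_pos by simp
    next
      case False
      hence mup: "mu > 0" using mu_nn by simp
      have "0 \<le> mu * (y \<bullet> x)" using Spsd[of y] ySy by simp
      hence "0 \<le> y \<bullet> x" using mup by (simp add: zero_le_mult_iff)
      hence "mu * (Dx \<bullet> x) \<le> x \<bullet> x" using yx by simp
      moreover have "mu * (dl * (x \<bullet> x)) \<le> mu * (Dx \<bullet> x)" using Dlo mup by simp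
      ultimately have "(mu * dl) * (x \<bullet> x) \<le> 1 * (x \<bullet> x)" by (simp add: mult_ac)
      hence "mu * dl \<le> 1" using xpos by (simp add: mult_le_cancel_right)
      thus ?thesis using dl_pos by (simp add: m_eq field_simps)
    qed
    have lo: "k \<le> mu"
    proof -
      have "lam * (norm y)^2 \<le> mu * (y \<bullet> x)" using lamS[of y] ySy by (simp add: dot_square_norm)
      also have "\<dots> \<le> mu * (norm y * norm x)" using mu_nn by (intro mult_left_mono norm_cauchy_schwarz) simp_all
      finally have h1: "lam * (norm y)^2 \<le> mu * (norm y * norm x)" .
      have h2: "lam * norm y \<le> mu * norm x"
      proof (cases "norm y = 0")
        case True then show ?thesis using mu_nn by simp
      next
        case False
        hence "norm y > 0" by simp
        moreover have "(lam * norm y) * norm y \<le> (mu * norm x) * norm y" using h1 by (simp add: power2_eq_square mult_ac)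
        ultimately show ?thesis by simp
      qed
      have "y \<bullet> x \<le> norm y * norm x" by (rule norm_cauchy_schwarz)
      also have "\<dots> \<le> (mu * norm x / lam) * norm x"
        using h2 lam_pos by (intro mult_right_mono) (simp_all add: field_simps)
      also have "\<dots> = mu * (x \<bullet> x) / lam" by (simp add: dot_square_norm power2_eq_square)
      finally have "x \<bullet> x - mu * (Dx \<bullet> x) \<le> mu * (x \<bullet> x) / lam" using yx by simp
      moreover have "mu * (Dx \<bullet> x) \<le> mu * (du * (x \<bullet> x))" using Dhi mu_nn by (simp add: mult_left_mono)
      ultimately have "1 * (x \<bullet> x) \<le> (mu * (du + 1 / lam)) * (x \<bullet> x)" by (simp add: field_simps)
      hence h3: "1 \<le> mu * (du + 1 / lam)" using xpos by (simp add: mult_le_cancel_right)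
      have apos: "du + 1 / lam > 0" using du_pos lam_pos by (simp add: add_pos_pos)
      show ?thesis unfolding k_eq using pos_divide_le_eq[OF apos] h3 by (metis mult.commute)
    qed
    show ?thesis using up lo by simp
  qed
  obtain QS :: "real^'n^'n" and eS where QS: "transpose QS ** QS = mat 1" "Sb ** QS = QS ** diag_mat eS"
    using spectral[OF trSb] by blast
  note SF = spec_facts[OF QS]
  have eSb: "k \<le> eS $ j \<and> eS $ j \<le> m" for j
    using SF(2)[of j] bnd by blast
  define n where "n = CARD('n)"
  have detlo: "k ^ n \<le> det Sb"
    unfolding SF(1) n_def using eSb k_pos
    by (subst prod_constant[symmetric]) (intro prod_mono, auto)
  have dethi: "det Sb \<le> m ^ n"
    unfolding SF(1) n_def using eSb k_pos
    by (subst prod_constant[symmetric]) (intro prod_mono, auto intro: order_trans[of 0 k])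
  have dpos: "det Sb > 0" using detlo k_pos by (meson order_less_le_trans zero_less_power)
  have L1: "real n * ln k \<le> ln (det Sb)"
    using detlo k_pos dpos by (metis ln_le_cancel_iff ln_realpow zero_less_power)
  have L2: "ln (det Sb) \<le> real n * ln m"
    using dethi m_pos dpos by (metis ln_le_cancel_iff ln_realpow zero_less_power)
  show ?thesis
    using L1 L2 unfolding Let_def k_def m_def lam_def n_def Sb_def Mi_def M_def C_def V_def by simp
qed

end
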